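(* Let $d\geq 2$ and $U=(u_{ij})\in\mathcal{U}_d(\mathbb{C})$. If for some permutation matrix $\Pi$ and some $D\in\mathcal{DU}_d(\mathbb{C})$ $$\|U-D\Pi\|_{\mathrm{HS}}^2<2-2\sqrt{\frac{1+\frac{1}{\sqrt d}}{2}},$$ then Alice and Bob are not able to generate a maximally mutually coherent state with just three strokes of the coherence engine, i.e., there are no $l\in\{1,\dots,d\}$ and $D_1,D_2\in\mathcal{DU}_d(\mathbb{C})$ such that $D_2U^\dagger D_1U|l\rangle$ is maximally mutually coherent.
   Context: $\|\cdot\|_{\mathrm{HS}}$ is the Hilbert–Schmidt norm. $\mathcal{U}_d(\mathbb{C})$ denotes the group of $d\times d$ unitary matrices and $\mathcal{DU}_d(\mathbb{C})$ its subgroup of diagonal unitary matrices; $\{|j\rangle\}$ is the computational basis (Alice's basis) and Bob's basis is $\{U^\dagger|j\rangle\}$. Alice's free operations are $\mathcal{DU}_d(\mathbb{C})$, Bob's are $\{U^\dagger DU:D\in\mathcal{DU}_d(\mathbb{C})\}$; a three-stroke protocol: Alice prepares $|l\rangle$, Bob applies $U^\dagger D_1U$, Alice applies $D_2$. A pure state $|\psi\rangle$ is maximally mutually coherent if $|\langle j|\psi\rangle|=|\langle j|U|\psi\rangle|=1/\sqrt d$ for all $j$. *)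

theory Defs
  imports "HOL-Analysis.Analysis"
begin

text \<open>d x d complex matrices are indexed by a finite type 'n with d = CARD('n).\<close>

definition cadj :: "complex^'n^'m \<Rightarrow> complex^'m^'n" where
  "cadj A = (\<chi> i j. cnj (A $ j $ i))"

definition unitary_mat :: "complex^'n^'n \<Rightarrow> bool" where
  "unitary_mat U \<longleftrightarrow> cadj U ** U = mat 1 \<and> U ** cadj U = mat 1"

definition diag_unitary :: "complex^'n^'n \<Rightarrow> bool" where
  "diag_unitary D \<longleftrightarrow> (\<forall>i j. i \<noteq> j \<longrightarrow> D $ i $ j = 0) \<and> (\<forall>i. cmod (D $ i $ i) = 1)"

definition perm_mat :: "('n \<Rightarrow> 'n) \<Rightarrow> complex^'n^'n" where
  "perm_mat p = (\<chi> i j. if i = p j then 1 else 0)"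

definition hs_norm_sq :: "complex^'n^'m \<Rightarrow> real" where
  "hs_norm_sq A = (\<Sum>i\<in>UNIV. \<Sum>j\<in>UNIV. (cmod (A $ i $ j))^2)"

definition ket :: "'n \<Rightarrow> complex^'n" where
  "ket l = axis l 1"

definition max_mut_coherent :: "complex^'n^'n \<Rightarrow> complex^'n \<Rightarrow> bool" where
  "max_mut_coherent U \<psi> \<longleftrightarrow>
     (\<forall>j. cmod (\<psi> $ j) = 1 / sqrt (real CARD('n)) \<and>
          cmod ((U *v \<psi>) $ j) = 1 / sqrt (real CARD('n)))"

end

theory Submission
  imports Defs
begin

lemma diag_mult_vec:
  assumes "diag_unitary D"
  shows "(D *v v) $ i = D $ i $ i * v $ i"
proof -
  have "(D *v v) $ i = (\<Sum>j\<in>UNIV. D $ i $ j * v $ j)"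
    by (simp add: matrix_vector_mult_def)
  also have "\<dots> = (\<Sum>j\<in>UNIV. if j = i then D $ i $ i * v $ i else 0)"
    using assms unfolding diag_unitary_def by (intro sum.cong) auto
  finally show ?thesis by simp
qed

lemma col_ket: "(U *v ket l) $ i = U $ i $ l"
proof -
  have "(U *v ket l) $ i = (\<Sum>j\<in>UNIV. U $ i $ j * (ket l) $ j)"
    by (simp add: matrix_vector_mult_def)
  also have "\<dots> = (\<Sum>j\<in>UNIV. if j = l then U $ i $ l else 0)"
    by (intro sum.cong) (auto simp: ket_def axis_def)
  finally show ?thesis by simp
qed

lemma col_norm:
  assumes "unitary_mat (U::complex^'n^'n)"
  shows "(\<Sum>k\<in>UNIV. (cmod (U $ k $ l))^2) = 1"
proof -
  have "(cadj U ** U) $ l $ l = 1" using assms by (simp add: unitary_mat_def mat_def)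
  hence "(\<Sum>k\<in>UNIV. cnj (U $ k $ l) * U $ k $ l) = 1"
    by (simp add: matrix_matrix_mult_def cadj_def)
  moreover have "complex_of_real ((cmod (U $ k $ l))^2) = cnj (U $ k $ l) * U $ k $ l" for k
    by (metis complex_norm_square mult.commute)
  ultimately have "(\<Sum>k\<in>UNIV. complex_of_real ((cmod (U $ k $ l))^2)) = 1"
    by simp
  hence "complex_of_real (\<Sum>k\<in>UNIV. (cmod (U $ k $ l))^2) = 1" by simp
  thus ?thesis using of_real_eq_1_iff by blast
qed

theorem proposition16:
  fixes U D :: "complex^'n^'n" and p :: "'n \<Rightarrow> 'n"
  assumes "CARD('n) \<ge> 2"
    and "unitary_mat U"
    and "p permutes UNIV"
    and "diag_unitary D"
    and "hs_norm_sq (U - D ** perm_mat p)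
           < 2 - 2 * sqrt ((1 + 1 / sqrt (real CARD('n))) / 2)"
  shows "\<not> (\<exists>l D1 D2. diag_unitary D1 \<and> diag_unitary D2 \<and>
            max_mut_coherent U (D2 *v (cadj U *v (D1 *v (U *v ket l)))))"
proof
  assume "\<exists>l D1 D2. diag_unitary D1 \<and> diag_unitary D2 \<and>
            max_mut_coherent U (D2 *v (cadj U *v (D1 *v (U *v ket l))))"
  then obtain l D1 D2 where d1: "diag_unitary D1" and d2: "diag_unitary D2"
    and mm: "max_mut_coherent U (D2 *v (cadj U *v (D1 *v (U *v ket l))))" by blast
  define q where "q = p l"
  define u where "u k = U $ k $ l" for k
  define \<delta> where "\<delta> = D $ q $ q"
  define s where "s = cmod (u q)"
  define c where "c = sqrt ((1 + 1 / sqrt (real CARD('n))) / 2)"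
  have un: "(\<Sum>k\<in>UNIV. (cmod (u k))^2) = 1" using col_norm[OF assms(2)] u_def by simp
  have sum_split: "(\<Sum>k\<in>UNIV. f k) = f q + (\<Sum>k\<in>UNIV-{q}. f k)" for f :: "'n \<Rightarrow> real"
    by (metis UNIV_I finite sum.remove)
  have rest: "(\<Sum>k\<in>UNIV-{q}. (cmod (u k))^2) = 1 - s^2"
    using un sum_split[of "\<lambda>k. (cmod (u k))^2"] s_def by simp
  have s0: "s \<ge> 0" by (simp add: s_def)
  have s1: "s \<le> 1"
  proof -
    have "(\<Sum>k\<in>UNIV-{q}. (cmod (u k))^2) \<ge> 0" by (intro sum_nonneg) simp
    hence "s^2 \<le> 1" using rest by simp
    thus ?thesis using s0 by (simp add: power_le_one_iff)
  qed
  have d\<delta>: "cmod \<delta> = 1" using assms(4) by (simp add: diag_unitary_def \<delta>_def)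
  have colDP: "(D ** perm_mat p) $ k $ l = (if k = q then \<delta> else 0)" for k
  proof -
    have "(D ** perm_mat p) $ k $ l = (\<Sum>j\<in>UNIV. D $ k $ j * (if j = q then 1 else 0))"
      by (simp add: matrix_matrix_mult_def perm_mat_def q_def)
    also have "\<dots> = D $ k $ q" by (simp add: if_distrib cong: if_cong)
    finally show ?thesis using assms(4) by (auto simp: diag_unitary_def \<delta>_def)
  qed
  have hs1: "hs_norm_sq (U - D ** perm_mat p) \<ge> (\<Sum>k\<in>UNIV. (cmod (u k - (if k = q then \<delta> else 0)))^2)"
  proof -
    have "(\<Sum>k\<in>UNIV. (cmod (u k - (if k = q then \<delta> else 0)))^2)
        = (\<Sum>i\<in>UNIV. (cmod ((U - D ** perm_mat p) $ i $ l))^2)"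
      by (simp add: colDP u_def)
    also have "\<dots> \<le> (\<Sum>i\<in>UNIV. \<Sum>j\<in>UNIV. (cmod ((U - D ** perm_mat p) $ i $ j))^2)"
    proof (intro sum_mono)
      fix i
      show "(cmod ((U - D ** perm_mat p) $ i $ l))^2 \<le> (\<Sum>j\<in>UNIV. (cmod ((U - D ** perm_mat p) $ i $ j))^2)"
        by (rule member_le_sum) auto
    qed
    finally show ?thesis by (simp add: hs_norm_sq_def)
  qed
  have "(\<Sum>k\<in>UNIV. (cmod (u k - (if k = q then \<delta> else 0)))^2)
      = (cmod (u q - \<delta>))^2 + (\<Sum>k\<in>UNIV-{q}. (cmod (u k))^2)"
  proof -
    have "(\<Sum>k\<in>UNIV-{q}. (cmod (u k - (if k = q then \<delta> else 0)))^2) = (\<Sum>k\<in>UNIV-{q}. (cmod (u k))^2)"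
      by (intro sum.cong) auto
    thus ?thesis using sum_split[of "\<lambda>k. (cmod (u k - (if k = q then \<delta> else 0)))^2"] by simp
  qed
  moreover have "cmod (u q - \<delta>) \<ge> 1 - s"
    using norm_triangle_ineq2[of \<delta> "u q"] d\<delta> s_def by (simp add: norm_minus_commute)
  hence "(cmod (u q - \<delta>))^2 \<ge> (1 - s)^2" using s1 by (intro power_mono) auto
  ultimately have hs2: "hs_norm_sq (U - D ** perm_mat p) \<ge> 2 - 2 * s"
    using hs1 rest by (simp add: power2_eq_square algebra_simps)
  let ?\<psi> = "D2 *v (cadj U *v (D1 *v (U *v ket l)))"
  have "?\<psi> $ l = D2 $ l $ l * (\<Sum>k\<in>UNIV. cnj (u k) * (D1 $ k $ k * u k))"
  proof -
    have "?\<psi> $ l = D2 $ l $ l * (cadj U *v (D1 *v (U *v ket l))) $ l"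
      by (rule diag_mult_vec[OF d2])
    also have "(cadj U *v (D1 *v (U *v ket l))) $ l = (\<Sum>k\<in>UNIV. cnj (U $ k $ l) * (D1 *v (U *v ket l)) $ k)"
      by (simp add: matrix_vector_mult_def cadj_def)
    also have "\<dots> = (\<Sum>k\<in>UNIV. cnj (u k) * (D1 $ k $ k * u k))"
      by (simp add: diag_mult_vec[OF d1] col_ket u_def)
    finally show ?thesis .
  qed
  hence "cmod (?\<psi> $ l) = cmod (\<Sum>k\<in>UNIV. D1 $ k $ k * complex_of_real ((cmod (u k))^2))"
  proof -
    have e: "cnj (u k) * (D1 $ k $ k * u k) = D1 $ k $ k * complex_of_real ((cmod (u k))^2)" for k
      by (metis complex_norm_square mult.commute mult.left_commute)
    assume "?\<psi> $ l = D2 $ l $ l * (\<Sum>k\<in>UNIV. cnj (u k) * (D1 $ k $ k * u k))"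
    hence "cmod (?\<psi> $ l) = cmod (\<Sum>k\<in>UNIV. cnj (u k) * (D1 $ k $ k * u k))"
      using d2 by (simp add: norm_mult diag_unitary_def)
    also have "\<dots> = cmod (\<Sum>k\<in>UNIV. D1 $ k $ k * complex_of_real ((cmod (u k))^2))"
      by (simp only: e)
    finally show ?thesis .
  qed
  moreover have "cmod (\<Sum>k\<in>UNIV. D1 $ k $ k * complex_of_real ((cmod (u k))^2)) \<ge> 2 * s^2 - 1"
  proof -
    let ?f = "\<lambda>k. D1 $ k $ k * complex_of_real ((cmod (u k))^2)"
    have nf: "cmod (?f k) = (cmod (u k))^2" for k
    proof -
      have "cmod (D1 $ k $ k) = 1" using d1 by (simp add: diag_unitary_def)
      thus ?thesis by (simp only: norm_mult norm_of_real power_abs abs_norm_cancel mult_1)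
    qed
    have "(\<Sum>k\<in>UNIV. ?f k) = ?f q + (\<Sum>k\<in>UNIV-{q}. ?f k)"
      by (rule sum.remove) simp_all
    hence "cmod (\<Sum>k\<in>UNIV. ?f k) \<ge> cmod (?f q) - cmod (\<Sum>k\<in>UNIV-{q}. ?f k)"
      using norm_diff_ineq[of "?f q" "\<Sum>k\<in>UNIV-{q}. ?f k"] by (simp only:)
    moreover have "cmod (\<Sum>k\<in>UNIV-{q}. ?f k) \<le> (\<Sum>k\<in>UNIV-{q}. cmod (?f k))"
      by (rule norm_sum)
    moreover have "(\<Sum>k\<in>UNIV-{q}. cmod (?f k)) = 1 - s^2"
      using rest nf by (simp only: )
    moreover have "cmod (?f q) = s^2" using nf s_def by (simp only:)
    ultimately show ?thesis by linarith
  qed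
  moreover have "cmod (?\<psi> $ l) = 1 / sqrt (real CARD('n))" using mm by (simp add: max_mut_coherent_def)
  ultimately have "2 * s^2 - 1 \<le> 1 / sqrt (real CARD('n))" by simp
  hence "s^2 \<le> (1 + 1 / sqrt (real CARD('n))) / 2" by simp
  hence "sqrt (s^2) \<le> c" unfolding c_def using real_sqrt_le_mono by blast
  hence "s \<le> c" using s0 by simp
  thus False using hs2 assms(5) c_def by simp
qed

end
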